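(* Let $s,r,R$ be positive integers and $\delta=(r+1)(R+1)-sr-1$. If $\delta\le 0$, then the ball $B(R)\subseteq\mathbb F_q^{s\times r}$ is $R$-closed with respect to the NRT metric; equivalently, for every $x\in\mathbb F_q^{s\times r}$ with $w(x)\ge R+1$ there is $c\in\mathbb F_q^{s\times r}$ with $d(c,x)\le R$ and $B(c,R)\cap B(R)=\emptyset$.
   Context: $q$ is a prime power, $\mathbb F_q^{s\times r}$ the set of $s\times r$ matrices over $\mathbb F_q$ with rows in $\mathbb F_q^{1\times r}$. For a row $y=(y_1,\dots,y_r)$, the NRT weight is $w(y)=\max\{j: y_j\neq 0\}$ if $y\neq0$ and $w(0)=0$; for a matrix, $w(x)=\sum_i w(x_i)$. The NRT metric is $d(x,y)=w(x-y)$; $B(c,R)=\{x: d(x,c)\le R\}$, $B(R)=B(0,R)$. A set is $R$-closed if its complement is a union of balls of radius $R$. *)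

theory Defs
  imports Main
begin

text \<open>Matrices in F_q^{s x r} are represented as functions nat => nat => 'a
  (row index i < s, column index j < r, 0-based) vanishing outside the box.\<close>

definition mats :: "nat \<Rightarrow> nat \<Rightarrow> (nat \<Rightarrow> nat \<Rightarrow> 'a::zero) set" where
  "mats s r = {x. \<forall>i j. (s \<le> i \<or> r \<le> j) \<longrightarrow> x i j = 0}"

definition row_wt :: "nat \<Rightarrow> (nat \<Rightarrow> 'a::zero) \<Rightarrow> nat" where
  "row_wt r y = (if \<forall>j<r. y j = 0 then 0 else Suc (GREATEST j. j < r \<and> y j \<noteq> 0))"

definition nrt_wt :: "nat \<Rightarrow> nat \<Rightarrow> (nat \<Rightarrow> nat \<Rightarrow> 'a::zero) \<Rightarrow> nat" where
  "nrt_wt s r x = (\<Sum>i<s. row_wt r (x i))"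

definition nrt_dist :: "nat \<Rightarrow> nat \<Rightarrow> (nat \<Rightarrow> nat \<Rightarrow> 'a::ab_group_add) \<Rightarrow> (nat \<Rightarrow> nat \<Rightarrow> 'a) \<Rightarrow> nat" where
  "nrt_dist s r x y = nrt_wt s r (\<lambda>i j. x i j - y i j)"

definition nrt_ball :: "nat \<Rightarrow> nat \<Rightarrow> (nat \<Rightarrow> nat \<Rightarrow> 'a::ab_group_add) \<Rightarrow> nat \<Rightarrow> (nat \<Rightarrow> nat \<Rightarrow> 'a) set" where
  "nrt_ball s r c R = {x \<in> mats s r. nrt_dist s r x c \<le> R}"

definition R_closed :: "nat \<Rightarrow> nat \<Rightarrow> nat \<Rightarrow> (nat \<Rightarrow> nat \<Rightarrow> 'a::ab_group_add) set \<Rightarrow> bool" where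
  "R_closed s r R A \<longleftrightarrow> A \<subseteq> mats s r \<and>
     (\<exists>C \<subseteq> mats s r. mats s r - A = (\<Union>c\<in>C. nrt_ball s r c R))"

end

theory Submission
  imports Defs
begin

lemma row_wt_le_iff: "row_wt r u \<le> n \<longleftrightarrow> (\<forall>j<r. n \<le> j \<longrightarrow> u j = 0)"
proof (cases "\<forall>j<r. u j = 0")
  case True thus ?thesis by (simp add: row_wt_def)
next
  case False
  then obtain j0 where j0: "j0<r" "u j0 \<noteq> 0" by auto
  let ?P = "\<lambda>j. j < r \<and> u j \<noteq> 0"
  have GI: "?P (Greatest ?P)" by (rule GreatestI_nat[of ?P j0 r]) (use j0 in auto)
  have Gle: "\<And>j. ?P j \<Longrightarrow> j \<le> Greatest ?P" by (rule Greatest_le_nat[of ?P _ r]) auto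
  have rw: "row_wt r u = Suc (Greatest ?P)" using False by (simp add: row_wt_def)
  show ?thesis
  proof
    assume H: "row_wt r u \<le> n"
    show "\<forall>j<r. n \<le> j \<longrightarrow> u j = 0"
    proof (intro allI impI)
      fix j assume "j < r" "n \<le> j"
      show "u j = 0"
      proof (rule ccontr)
        assume "u j \<noteq> 0"
        then have "j \<le> Greatest ?P" using Gle \<open>j<r\<close> by blast
        then show False using H rw \<open>n \<le> j\<close> by linarith
      qed
    qed
  next
    assume H: "\<forall>j<r. n \<le> j \<longrightarrow> u j = 0"
    show "row_wt r u \<le> n"
    proof (rule ccontr)
      assume "\<not> row_wt r u \<le> n"
      then have "n \<le> Greatest ?P" using rw by linarith
      then show False using H GI by blast
    qed
  qed
qed

lemma row_wt_ge: "j < r \<Longrightarrow> u j \<noteq> 0 \<Longrightarrow> Suc j \<le> row_wt r u"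
  using row_wt_le_iff[of r u j] by (metis not_less_eq_eq order_refl)

lemma row_wt_zero[simp]: "row_wt r (\<lambda>j. 0) = 0"
  by (simp add: row_wt_def)

lemma row_wt_tri:
  fixes a c :: "nat \<Rightarrow> 'a::ab_group_add"
  shows "row_wt r c \<le> row_wt r a + row_wt r (\<lambda>j. a j - c j)"
proof -
  have A0: "\<forall>j<r. row_wt r a \<le> j \<longrightarrow> a j = 0"
    using row_wt_le_iff[of r a "row_wt r a"] by simp
  have B0: "\<forall>j<r. row_wt r (\<lambda>j. a j - c j) \<le> j \<longrightarrow> a j - c j = 0"
    using row_wt_le_iff[of r "\<lambda>j. a j - c j" "row_wt r (\<lambda>j. a j - c j)"] by simp
  have A: "\<forall>j<r. row_wt r a + row_wt r (\<lambda>j. a j - c j) \<le> j \<longrightarrow> a j = 0"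
    using A0 by auto
  have B: "\<forall>j<r. row_wt r a + row_wt r (\<lambda>j. a j - c j) \<le> j \<longrightarrow> a j - c j = 0"
    using B0 by auto
  show ?thesis unfolding row_wt_le_iff[of r c] using A B by auto
qed

lemma row_wt_sym:
  fixes a b :: "nat \<Rightarrow> 'a::ab_group_add"
  shows "row_wt r (\<lambda>j. a j - b j) = row_wt r (\<lambda>j. b j - a j)"
proof -
  have "\<And>n. row_wt r (\<lambda>j. a j - b j) \<le> n \<longleftrightarrow> row_wt r (\<lambda>j. b j - a j) \<le> n"
    unfolding row_wt_le_iff by (metis eq_iff_diff_eq_0)
  then show ?thesis by (metis order_antisym order_refl)
qed

lemma row_wt_unit:
  assumes "1 \<le> m" "m \<le> r"
  shows "row_wt r (\<lambda>j. if j = m - 1 then (1::'a::field) else 0) = m"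
proof (rule order_antisym)
  show "row_wt r (\<lambda>j. if j = m - 1 then (1::'a) else 0) \<le> m"
    unfolding row_wt_le_iff using assms by auto
  have "Suc (m - 1) \<le> row_wt r (\<lambda>j. if j = m - 1 then (1::'a) else 0)"
    by (rule row_wt_ge) (use assms in auto)
  then show "m \<le> row_wt r (\<lambda>j. if j = m - 1 then (1::'a) else 0)" using assms by simp
qed

lemma row_wt_raise:
  fixes u :: "nat \<Rightarrow> 'a::field"
  assumes "row_wt r u < m" "m \<le> r"
  shows "row_wt r (\<lambda>j. u j + (if j = m - 1 then 1 else 0)) = m"
proof -
  have u0: "\<forall>j<r. m - 1 \<le> j \<longrightarrow> u j = 0"
    using row_wt_le_iff[of r u "m - 1"] assms by auto
  show ?thesis
  proof (rule order_antisym)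
    show "row_wt r (\<lambda>j. u j + (if j = m - 1 then 1 else 0)) \<le> m"
      unfolding row_wt_le_iff using u0 assms by auto
    have "Suc (m - 1) \<le> row_wt r (\<lambda>j. u j + (if j = m - 1 then 1 else 0))"
      by (rule row_wt_ge) (use assms u0 in auto)
    then show "m \<le> row_wt r (\<lambda>j. u j + (if j = m - 1 then 1 else 0))" using assms by simp
  qed
qed

lemma distrib:
  assumes "finite A" "n \<le> r * card A"
  shows "\<exists>g::nat\<Rightarrow>nat. (\<forall>i. g i \<le> r) \<and> (\<forall>i. i \<notin> A \<longrightarrow> g i = 0) \<and> sum g A = n"
  using assms
proof (induction A arbitrary: n rule: finite_induct)
  case empty
  then show ?case by (intro exI[of _ "\<lambda>_. 0"]) auto
next
  case (insert a F)
  have "n - min n r \<le> r * card F" using insert by (auto simp: min_def)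
  then obtain g where g: "\<forall>i. g i \<le> r" "\<forall>i. i \<notin> F \<longrightarrow> g i = 0" "sum g F = n - min n r"
    using insert.IH by blast
  define g' where "g' = g(a := min n r)"
  have "sum g' F = sum g F"
    by (rule sum.cong) (use insert in \<open>auto simp: g'_def\<close>)
  then have "sum g' (insert a F) = min n r + sum g F"
    using insert by (simp add: g'_def)
  also have "\<dots> = n" using g by simp
  finally show ?case using g insert by (intro exI[of _ g']) (auto simp: g'_def)
qed

lemma bad_center:
  fixes c :: "nat \<Rightarrow> nat \<Rightarrow> 'a::ab_group_add"
  assumes "2 * R + 1 \<le> nrt_wt s r c"
  shows "nrt_ball s r c R \<inter> nrt_ball s r (\<lambda>i j. 0) R = {}"
proof (rule ccontr)
  assume "nrt_ball s r c R \<inter> nrt_ball s r (\<lambda>i j. 0) R \<noteq> {}"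
  then obtain y where y1: "nrt_dist s r y c \<le> R" and y2: "nrt_dist s r y (\<lambda>i j. 0) \<le> R"
    unfolding nrt_ball_def by auto
  have "nrt_wt s r c \<le> (\<Sum>i<s. row_wt r (y i) + row_wt r (\<lambda>j. y i j - c i j))"
    unfolding nrt_wt_def by (rule sum_mono) (rule row_wt_tri)
  also have "\<dots> = nrt_dist s r y (\<lambda>i j. 0) + nrt_dist s r y c"
    by (simp add: nrt_dist_def nrt_wt_def sum.distrib)
  finally show False using y1 y2 assms by linarith
qed

lemma construct:
  fixes x :: "nat \<Rightarrow> nat \<Rightarrow> 'a::field"
  assumes xm: "x \<in> mats s r" and wx: "R + 1 \<le> nrt_wt s r x"
    and sm: "s = R + 1 + m" and rm: "R \<le> r * m"
  shows "\<exists>c\<in>mats s r. nrt_dist s r c x \<le> R \<and> 2 * R + 1 \<le> nrt_wt s r c"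
proof -
  define k where "k i = row_wt r (x i)" for i
  define Z where "Z = {i\<in>{..<s}. k i = 0}"
  have finZ: "finite Z" unfolding Z_def by auto
  have "\<exists>A. A \<subseteq> {..<s} \<and> R \<le> r * card A \<and> R + 1 \<le> (\<Sum>i\<in>{..<s}-A. k i)"
  proof (cases "R \<le> r * card Z")
    case True
    have ZS0: "Z \<subseteq> {..<s}" unfolding Z_def by auto
    have "sum k {..<s} = sum k ({..<s} - Z) + sum k Z"
      by (rule sum.subset_diff[OF ZS0]) simp
    moreover have "sum k Z = 0" unfolding Z_def by simp
    moreover have "sum k {..<s} = nrt_wt s r x" by (simp add: nrt_wt_def k_def)
    ultimately have "R + 1 \<le> sum k ({..<s} - Z)" using wx by linarith
    then show ?thesis using True ZS0 by blast
  next
    case False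
    have cZ: "card Z < m"
    proof (rule ccontr)
      assume "\<not> card Z < m"
      then have "r * m \<le> r * card Z" by simp
      then show False using False rm by linarith
    qed
    have ZS: "Z \<subseteq> {..<s}" unfolding Z_def by auto
    have "card ({..<s} - Z) = card {..<s} - card Z" by (rule card_Diff_subset[OF finZ ZS])
    then have "card ({..<s} - Z) = s - card Z" by simp
    then have "m - card Z \<le> card ({..<s} - Z)" using sm by simp
    then obtain T where T: "T \<subseteq> {..<s} - Z" "card T = m - card Z" "finite T"
      by (rule obtain_subset_with_card_n)
    define A where "A = Z \<union> T"
    have finT: "finite T" using T(1) finite_subset by blast
    have "card A = card Z + card T" unfolding A_def
      by (rule card_Un_disjoint[OF finZ finT]) (use T in auto)
    then have cA: "card A = m" using T cZ by simp
    have AS: "A \<subseteq> {..<s}" using ZS T unfolding A_def by auto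
    have finA': "finite A" using AS finite_subset by blast
    have "card ({..<s} - A) = card {..<s} - card A" by (rule card_Diff_subset[OF finA' AS])
    then have cD: "card ({..<s} - A) = R + 1" using cA sm by simp
    have "of_nat (card ({..<s} - A)) * 1 \<le> sum k ({..<s} - A)"
      by (rule sum_bounded_below) (auto simp: A_def Z_def)
    then have "card ({..<s} - A) \<le> sum k ({..<s} - A)" by simp
    then have "R + 1 \<le> sum k ({..<s} - A)" using cD by simp
    then show ?thesis using cA AS rm by blast
  qed
  then obtain A where AS: "A \<subseteq> {..<s}" and rA: "R \<le> r * card A"
    and kA: "R + 1 \<le> (\<Sum>i\<in>{..<s}-A. k i)" by blast
  have finA: "finite A" using AS finite_subset by blast
  obtain g where g: "\<forall>i. g i \<le> r" "\<forall>i. i \<notin> A \<longrightarrow> g i = 0" "sum g A = R"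
    using distrib[OF finA rA] by blast
  define ch where "ch i = (i \<in> A \<and> k i < g i)" for i
  define c where "c = (\<lambda>i j. if ch i then x i j + (if j = g i - 1 then (1::'a) else 0) else x i j)"
  have cm: "c \<in> mats s r"
    unfolding mats_def
  proof (intro CollectI allI impI)
    fix i j assume ij: "s \<le> i \<or> r \<le> j"
    have x0: "x i j = 0" using xm ij unfolding mats_def by blast
    show "c i j = 0"
    proof (cases "ch i")
      case True
      then have "i \<in> A" "0 < g i" by (auto simp: ch_def)
      then have "i < s" "g i - 1 < r" using AS g(1)[rule_format, of i] by auto
      then have "j \<noteq> g i - 1" using ij by auto
      then show ?thesis using True x0 by (simp add: c_def)
    next
      case False
      then show ?thesis using x0 by (simp add: c_def)
    qed
  qed
  have rowc: "row_wt r (c i) = (if ch i then g i else k i)" for i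
  proof (cases "ch i")
    case True
    then have "c i = (\<lambda>j. x i j + (if j = g i - 1 then 1 else 0))" by (auto simp: c_def)
    then show ?thesis using True row_wt_raise[of r "x i" "g i"] g(1) by (simp add: ch_def k_def)
  next
    case False
    then have "c i = x i" by (auto simp: c_def)
    then show ?thesis using False by (simp add: k_def)
  qed
  have rowd: "row_wt r (\<lambda>j. c i j - x i j) = (if ch i then g i else 0)" for i
  proof (cases "ch i")
    case True
    then have "(\<lambda>j. c i j - x i j) = (\<lambda>j. if j = g i - 1 then 1 else 0)" by (auto simp: c_def)
    then show ?thesis using True row_wt_unit[of "g i" r] g(1) by (simp add: ch_def)
  next
    case False
    then have "(\<lambda>j. c i j - x i j) = (\<lambda>j. 0)" by (auto simp: c_def)
    then show ?thesis using False by simp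
  qed
  have "nrt_dist s r c x \<le> (\<Sum>i<s. if i \<in> A then g i else 0)"
    unfolding nrt_dist_def nrt_wt_def
    by (rule sum_mono) (auto simp: rowd ch_def)
  also have "\<dots> = sum g ({..<s} \<inter> A)" by (simp add: sum.inter_restrict)
  also have "{..<s} \<inter> A = A" using AS by auto
  finally have d: "nrt_dist s r c x \<le> R" using g by simp
  have "(\<Sum>i<s. if i \<in> A then g i else k i) \<le> nrt_wt s r c"
    unfolding nrt_wt_def
    by (rule sum_mono) (auto simp: rowc ch_def)
  moreover have "(\<Sum>i<s. if i \<in> A then g i else k i) = sum g ({..<s} \<inter> {i. i \<in> A}) + sum k ({..<s} \<inter> - {i. i \<in> A})"
    by (rule sum.If_cases) simp
  moreover have "{..<s} \<inter> {i. i \<in> A} = A" using AS by auto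
  moreover have "{..<s} \<inter> - {i. i \<in> A} = {..<s} - A" by auto
  ultimately have "2 * R + 1 \<le> nrt_wt s r c" using g kA by simp
  then show ?thesis using cm d by blast
qed

theorem mainTheorem6:
  fixes s r R :: nat
  assumes "s > 0" and "r > 0" and "R > 0"
    and "(int r + 1) * (int R + 1) - int s * int r - 1 \<le> 0"
  shows "R_closed s r R (nrt_ball s r (\<lambda>i j. 0 :: 'a::{finite,field}) R)
    \<and> (\<forall>x \<in> mats s r. nrt_wt s r x \<ge> R + 1 \<longrightarrow>
         (\<exists>c \<in> mats s r. nrt_dist s r c x \<le> R
            \<and> nrt_ball s r c R \<inter> nrt_ball s r (\<lambda>i j. 0 :: 'a) R = {}))"
proof -
  have h1: "int (r * R + r + R) \<le> int (s * r)" using assms(4) by (simp add: algebra_simps)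
  then have h: "r * R + r + R \<le> s * r" by linarith
  have "R + 1 < s"
  proof (rule ccontr)
    assume "\<not> R + 1 < s"
    then have "s \<le> R + 1" by simp
    then have "s * r \<le> (R + 1) * r" by (rule mult_right_mono) simp
    then show False using h assms(3) by (simp add: algebra_simps)
  qed
  then obtain m where sm: "s = R + 1 + m" by (metis less_imp_add_positive add.commute)
  have "s * r = r * R + r + r * m" unfolding sm by (simp add: algebra_simps)
  then have rm: "R \<le> r * m" using h by linarith
  have P2: "\<forall>x \<in> mats s r. nrt_wt s r x \<ge> R + 1 \<longrightarrow>
         (\<exists>c \<in> mats s r. nrt_dist s r c x \<le> R
            \<and> nrt_ball s r c R \<inter> nrt_ball s r (\<lambda>i j. 0 :: 'a) R = {})"
  proof (intro ballI impI)
    fix x :: "nat \<Rightarrow> nat \<Rightarrow> 'a" assume "x \<in> mats s r" "R + 1 \<le> nrt_wt s r x"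
    then obtain c where "c \<in> mats s r" "nrt_dist s r c x \<le> R" "2 * R + 1 \<le> nrt_wt s r c"
      using construct[OF _ _ sm rm] by blast
    then show "\<exists>c \<in> mats s r. nrt_dist s r c x \<le> R
            \<and> nrt_ball s r c R \<inter> nrt_ball s r (\<lambda>i j. 0 :: 'a) R = {}"
      using bad_center by blast
  qed
  have dsym: "nrt_dist s r a b = nrt_dist s r b a" for a b :: "nat \<Rightarrow> nat \<Rightarrow> 'a"
    unfolding nrt_dist_def nrt_wt_def by (rule sum.cong[OF refl]) (rule row_wt_sym)
  have w0: "nrt_dist s r x (\<lambda>i j. 0) = nrt_wt s r x" for x :: "nat \<Rightarrow> nat \<Rightarrow> 'a"
    by (simp add: nrt_dist_def)
  define C where "C = {c \<in> mats s r. nrt_ball s r c R \<inter> nrt_ball s r (\<lambda>i j. 0 :: 'a) R = {}}"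
  have "mats s r - nrt_ball s r (\<lambda>i j. 0 :: 'a) R = (\<Union>c\<in>C. nrt_ball s r c R)"
  proof
    show "mats s r - nrt_ball s r (\<lambda>i j. 0 :: 'a) R \<subseteq> (\<Union>c\<in>C. nrt_ball s r c R)"
    proof
      fix x assume x: "x \<in> mats s r - nrt_ball s r (\<lambda>i j. 0 :: 'a) R"
      then have "R + 1 \<le> nrt_wt s r x" by (auto simp: nrt_ball_def w0)
      then obtain c where "c \<in> mats s r" "nrt_dist s r c x \<le> R"
          "nrt_ball s r c R \<inter> nrt_ball s r (\<lambda>i j. 0 :: 'a) R = {}"
        using P2 x by blast
      then show "x \<in> (\<Union>c\<in>C. nrt_ball s r c R)"
        using x dsym[of c x] unfolding C_def nrt_ball_def by auto
    qed
  next
    show "(\<Union>c\<in>C. nrt_ball s r c R) \<subseteq> mats s r - nrt_ball s r (\<lambda>i j. 0 :: 'a) R"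
      unfolding C_def nrt_ball_def by blast
  qed
  moreover have "C \<subseteq> mats s r" unfolding C_def by blast
  moreover have "nrt_ball s r (\<lambda>i j. 0 :: 'a) R \<subseteq> mats s r" unfolding nrt_ball_def by blast
  ultimately have "R_closed s r R (nrt_ball s r (\<lambda>i j. 0 :: 'a) R)"
    unfolding R_closed_def by blast
  then show ?thesis using P2 by blast
qed

end
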